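(* Let $X$ be a finite-dimensional real vector space, ordered by a closed cone $X_+$ with non-empty interior. Then the dual cone $\mathcal{L}(X)'_+ := \{\varphi \in \mathcal{L}(X)' : \varphi(T) \ge 0 \text{ for all } T \in \mathcal{L}(X)_+\}$ is equal to the convex hull of the set $E := \{\varphi_{x,x'} : x \in X_+,\ x' \in X'_+\}$ (in particular this convex hull is closed).
   Context: A cone is a non-empty subset $X_+\subseteq X$ with $X_+ + X_+\subseteq X_+$, $\lambda X_+\subseteq X_+$ for $\lambda\ge 0$, and $X_+\cap(-X_+)=\{0\}$. The dual cone is $X'_+ := \{x' \in X' : \langle x', x\rangle \ge 0 \text{ for all } x \in X_+\}$. $\mathcal{L}(X)$ is the space of linear maps $X\to X$ and $\mathcal{L}(X)_+ := \{T: TX_+ \subseteq X_+\}$. For $x \in X$, $x' \in X'$, the functional $\varphi_{x,x'}$ on $\mathcal{L}(X)$ is defined by $\langle \varphi_{x,x'}, M\rangle := \langle x', Mx\rangle = \operatorname{trace}(M(x\otimes x'))$, where $(x\otimes x')y := \langle x', y\rangle x$. *)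

theory Defs
  imports "HOL-Analysis.Analysis"
begin

definition ordering_cone :: "'a::real_vector set \<Rightarrow> bool" where
  "ordering_cone C \<longleftrightarrow> C \<noteq> {} \<and> (\<forall>x\<in>C. \<forall>y\<in>C. x + y \<in> C)
     \<and> (\<forall>c::real. c \<ge> 0 \<longrightarrow> (\<forall>x\<in>C. c *\<^sub>R x \<in> C))
     \<and> C \<inter> uminus ` C = {0}"

text \<open>Dual cone of a set C in a (finite-dimensional) normed space; in finite
  dimension every linear functional is bounded, so blinfun is the algebraic dual.\<close>
definition dual_cone :: "'b::real_normed_vector set \<Rightarrow> ('b \<Rightarrow>\<^sub>L real) set" where
  "dual_cone C = {f. \<forall>x\<in>C. 0 \<le> blinfun_apply f x}"

definition pos_ops :: "'a::euclidean_space set \<Rightarrow> ('a \<Rightarrow>\<^sub>L 'a) set" where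
  "pos_ops C = {T. \<forall>x\<in>C. blinfun_apply T x \<in> C}"

definition phi :: "'a::euclidean_space \<Rightarrow> ('a \<Rightarrow>\<^sub>L real) \<Rightarrow> (('a \<Rightarrow>\<^sub>L 'a) \<Rightarrow>\<^sub>L real)" where
  "phi x x' = Blinfun (\<lambda>M. blinfun_apply x' (blinfun_apply M x))"

end

theory Submission
  imports Defs
begin


typedef (overloaded) ('a::euclidean_space) idx = "Basis :: 'a set"
  using nonempty_Basis by blast

instance idx :: (euclidean_space) finite
proof
  have "UNIV = Abs_idx ` (Basis :: 'a set)"
    using type_definition.univ[OF type_definition_idx] .
  then show "finite (UNIV :: 'a idx set)" by (metis finite_Basis finite_imageI)
qed

lemma sum_idx_pair:
  fixes f :: "'a::euclidean_space idx \<times> 'a idx \<Rightarrow> 'b::comm_monoid_add"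
  shows "sum f UNIV = (\<Sum>i\<in>(Basis::'a set). \<Sum>j\<in>Basis. f (Abs_idx i, Abs_idx j))"
proof -
  have U: "(UNIV :: 'a idx set) = Abs_idx ` Basis"
    using type_definition.univ[OF type_definition_idx] .
  have inj: "inj_on Abs_idx (Basis::'a set)"
    by (meson Abs_idx_inject inj_onI)
  have "(UNIV :: ('a idx \<times> 'a idx) set) = Abs_idx ` Basis \<times> Abs_idx ` Basis"
    using U by auto
  then have "sum f UNIV = (\<Sum>i\<in>Abs_idx ` (Basis::'a set). \<Sum>j\<in>Abs_idx ` Basis. f (i, j))"
    by (simp add: sum.cartesian_product)
  also have "\<dots> = (\<Sum>i\<in>(Basis::'a set). \<Sum>j\<in>Basis. f (Abs_idx i, Abs_idx j))"
    by (simp add: sum.reindex[OF inj])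
  finally show ?thesis .
qed

definition Eij :: "'a::euclidean_space \<Rightarrow> 'a \<Rightarrow> ('a \<Rightarrow>\<^sub>L 'a)" where
  "Eij i j = Blinfun (\<lambda>x. (x \<bullet> j) *\<^sub>R i)"

lemma Eij_apply[simp]: "blinfun_apply (Eij i j) x = (x \<bullet> j) *\<^sub>R i"
proof -
  have "bounded_linear (\<lambda>x::'a. (x \<bullet> j) *\<^sub>R i)" by (intro bounded_linear_intros)
  then show ?thesis unfolding Eij_def by (simp add: bounded_linear_Blinfun_apply)
qed

lemma phi_apply[simp]: "blinfun_apply (phi x x') M = blinfun_apply x' (blinfun_apply M x)"
proof -
  have "bounded_linear (\<lambda>M. blinfun_apply x' (blinfun_apply M x))"
    by (rule bounded_linear_compose[OF blinfun.bounded_linear_right])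
      (rule bounded_bilinear.bounded_linear_left[OF bounded_bilinear_blinfun_apply])
  then show ?thesis unfolding phi_def by (simp add: bounded_linear_Blinfun_apply)
qed

lemma phi_scale: "phi (c *\<^sub>R x) x' = c *\<^sub>R phi x x'"
  by (rule blinfun_eqI) (simp add: blinfun.scaleR_right blinfun.scaleR_left)

definition J :: "(('a::euclidean_space \<Rightarrow>\<^sub>L 'a) \<Rightarrow>\<^sub>L real) \<Rightarrow> real^('a idx \<times> 'a idx)" where
  "J \<psi> = (\<chi> p. blinfun_apply \<psi> (Eij (Rep_idx (fst p)) (Rep_idx (snd p))))"

lemma linear_J: "linear J"
  by (rule linearI) (simp_all add: J_def vec_eq_iff blinfun.add_left blinfun.scaleR_left)

definition Mc :: "real^('a idx \<times> 'a idx) \<Rightarrow> ('a::euclidean_space \<Rightarrow>\<^sub>L 'a)" where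
  "Mc c = (\<Sum>p\<in>UNIV. (c $ p) *\<^sub>R Eij (Rep_idx (fst p)) (Rep_idx (snd p)))"

lemma Mc_rep: "blinfun_apply \<psi> (Mc c) = c \<bullet> J \<psi>"
  by (simp add: Mc_def J_def inner_vec_def blinfun.sum_right blinfun.scaleR_right)

lemma M_eq_Mc: "M = Mc (\<chi> p. blinfun_apply M (Rep_idx (snd p)) \<bullet> Rep_idx (fst p))"
proof (rule blinfun_eqI)
  fix x :: 'a
  have "blinfun_apply M x = (\<Sum>i\<in>Basis. (blinfun_apply M x \<bullet> i) *\<^sub>R i)"
    by (simp add: euclidean_representation)
  also have "\<dots> = (\<Sum>i\<in>Basis. \<Sum>j\<in>Basis. (blinfun_apply M j \<bullet> i) *\<^sub>R ((x \<bullet> j) *\<^sub>R i))"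
  proof (rule sum.cong[OF refl])
    fix i :: 'a assume "i \<in> Basis"
    have "blinfun_apply M x = blinfun_apply M (\<Sum>j\<in>Basis. (x \<bullet> j) *\<^sub>R j)"
      by (simp add: euclidean_representation)
    also have "\<dots> = (\<Sum>j\<in>Basis. (x \<bullet> j) *\<^sub>R blinfun_apply M j)"
      by (simp add: blinfun.sum_right blinfun.scaleR_right)
    finally have "blinfun_apply M x \<bullet> i = (\<Sum>j\<in>Basis. (x \<bullet> j) * (blinfun_apply M j \<bullet> i))"
      by (simp add: inner_sum_left)
    then show "(blinfun_apply M x \<bullet> i) *\<^sub>R i = (\<Sum>j\<in>Basis. (blinfun_apply M j \<bullet> i) *\<^sub>R ((x \<bullet> j) *\<^sub>R i))"
      by (simp add: scaleR_sum_left mult.commute)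
  qed
  also have "\<dots> = blinfun_apply (Mc (\<chi> p. blinfun_apply M (Rep_idx (snd p)) \<bullet> Rep_idx (fst p))) x"
    unfolding Mc_def
    by (simp add: blinfun.sum_left blinfun.scaleR_left sum_idx_pair Abs_idx_inverse mult.commute)
  finally show "blinfun_apply M x = blinfun_apply (Mc (\<chi> p. blinfun_apply M (Rep_idx (snd p)) \<bullet> Rep_idx (fst p))) x" .
qed

lemma J_inj: "J \<psi>1 = J \<psi>2 \<Longrightarrow> \<psi>1 = \<psi>2"
  by (rule blinfun_eqI) (metis M_eq_Mc Mc_rep)

definition g :: "'a::euclidean_space \<times> 'a \<Rightarrow> real^('a idx \<times> 'a idx)" where
  "g xa = (\<chi> p. (fst xa \<bullet> Rep_idx (snd p)) * (snd xa \<bullet> Rep_idx (fst p)))"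

lemma J_phi: "J (phi x (blinfun_inner_left a)) = g (x, a)"
  by (simp add: J_def g_def vec_eq_iff inner_commute)

lemma continuous_g: "continuous_on S g"
  unfolding g_def by (intro continuous_intros)



lemma cone_sep:
  fixes z :: "'b::{real_inner,heine_borel}"
  assumes "convex S" "closed S" "z \<notin> S" "0 \<in> S"
    and con: "\<And>c y. c \<ge> 0 \<Longrightarrow> y \<in> S \<Longrightarrow> c *\<^sub>R y \<in> S"
  shows "\<exists>c. c \<bullet> z < 0 \<and> (\<forall>y\<in>S. 0 \<le> c \<bullet> y)"
proof -
  obtain a b where ab: "a \<bullet> z < b" "\<forall>x\<in>S. b < a \<bullet> x"
    using separating_hyperplane_closed_point[OF assms(1-3)] by blast
  have b0: "b < 0" using ab(2) assms(4) by force
  have "0 \<le> a \<bullet> y" if "y \<in> S" for y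
  proof (rule ccontr)
    assume "\<not> 0 \<le> a \<bullet> y"
    then have neg: "a \<bullet> y < 0" by simp
    define c where "c = b / (a \<bullet> y)"
    have "c \<ge> 0" using neg b0 by (simp add: c_def divide_nonpos_neg)
    then have "b < a \<bullet> (c *\<^sub>R y)" using ab(2) con that by blast
    also have "a \<bullet> (c *\<^sub>R y) = b" using neg by (simp add: c_def)
    finally show False by simp
  qed
  then show ?thesis using ab b0 by (intro exI[of _ a]) auto
qed

lemma oc_zero: "ordering_cone K \<Longrightarrow> 0 \<in> K"
  unfolding ordering_cone_def by (metis all_not_in_conv order_refl scaleR_zero_left)

lemma oc_add: "ordering_cone K \<Longrightarrow> x \<in> K \<Longrightarrow> y \<in> K \<Longrightarrow> x + y \<in> K"
  unfolding ordering_cone_def by blast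

lemma oc_scale: "ordering_cone K \<Longrightarrow> 0 \<le> c \<Longrightarrow> x \<in> K \<Longrightarrow> c *\<^sub>R x \<in> K"
  unfolding ordering_cone_def by blast

lemma oc_convex: "ordering_cone K \<Longrightarrow> convex K"
  unfolding convex_def by (meson oc_add oc_scale)

lemma oc_sum: assumes "ordering_cone K" "finite S" "\<forall>v\<in>S. f v \<in> K" shows "sum f S \<in> K"
  using assms(2,3)
proof (induction S rule: finite_induct)
  case empty then show ?case by (simp add: oc_zero[OF assms(1)])
next
  case (insert x F) then show ?case by (simp add: oc_add[OF assms(1)])
qed

lemma oc_pointed_sum:
  assumes K: "ordering_cone K" and "finite S" "\<forall>v\<in>S. f v \<in> K" "sum f S = 0" "v \<in> S"
  shows "f v = 0"
proof -
  have s: "sum f (S - {v}) \<in> K" using oc_sum[OF K, of "S - {v}" f] assms by auto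
  have "f v + sum f (S - {v}) = 0" using assms sum.remove by metis
  then have "f v = - sum f (S - {v})" by (simp add: eq_neg_iff_add_eq_0)
  then have "f v \<in> K \<inter> uminus ` K" using s assms by auto
  then show ?thesis using K unfolding ordering_cone_def by blast
qed

lemma pos_interior:
  fixes a w :: "'a::euclidean_space"
  assumes Kd: "\<forall>x\<in>K. 0 \<le> x \<bullet> a" and "a \<noteq> 0" and "w \<in> interior K"
  shows "0 < w \<bullet> a"
proof -
  obtain e where e: "e > 0" "ball w e \<subseteq> K" using assms(3) mem_interior by blast
  define d where "d = e / 2 / norm a"
  have d: "d > 0" using e assms(2) by (simp add: d_def)
  have "w - d *\<^sub>R a \<in> ball w e" using e assms(2) by (simp add: d_def dist_norm)
  then have "0 \<le> (w - d *\<^sub>R a) \<bullet> a" using e Kd by blast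
  then have "d * (a \<bullet> a) \<le> w \<bullet> a" by (simp add: inner_diff_left)
  moreover have "0 < d * (a \<bullet> a)" using d assms(2) by simp
  ultimately show ?thesis by linarith
qed

lemma bipolar:
  fixes y :: "'a::euclidean_space"
  assumes K: "ordering_cone K" "closed K" and y: "\<forall>a. (\<forall>x\<in>K. 0 \<le> x \<bullet> a) \<longrightarrow> 0 \<le> y \<bullet> a"
  shows "y \<in> K"
proof (rule ccontr)
  assume "y \<notin> K"
  then obtain c where "c \<bullet> y < 0" "\<forall>x\<in>K. 0 \<le> c \<bullet> x"
    using cone_sep[OF oc_convex[OF K(1)] K(2) _ oc_zero[OF K(1)]] oc_scale[OF K(1)] by blast
  then show False using y by (metis inner_commute linorder_not_less)
qed



lemma zero_notin_hull:
  fixes K :: "'a::euclidean_space set"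
  assumes K: "ordering_cone K" and w: "w \<in> interior K"
  shows "0 \<notin> convex hull (g ` ((K \<inter> sphere 0 1) \<times> ({a. \<forall>x\<in>K. 0 \<le> x \<bullet> a} \<inter> sphere 0 1)))"
    (is "_ \<notin> convex hull (g ` ?P)")
proof
  assume "0 \<in> convex hull (g ` ?P)"
  then obtain S u where S: "finite S" "S \<subseteq> g ` ?P" "\<forall>v\<in>S. 0 \<le> u v" "sum u S = 1"
      "(\<Sum>v\<in>S. u v *\<^sub>R v) = 0"
    unfolding convex_hull_explicit by blast
  have "\<forall>v\<in>S. \<exists>p. p \<in> ?P \<and> v = g p"
  proof
    fix v assume "v \<in> S"
    then have "v \<in> g ` ?P" using S(2) by (rule subsetD[rotated])
    then obtain p where "p \<in> ?P" "v = g p" by (rule imageE)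
    then show "\<exists>p. p \<in> ?P \<and> v = g p" by (intro exI conjI)
  qed
  then have "\<exists>pick. \<forall>v\<in>S. pick v \<in> ?P \<and> v = g (pick v)" by (rule bchoice)
  then obtain pick where pick0: "\<forall>v\<in>S. pick v \<in> ?P \<and> v = g (pick v)" ..
  have pick: "pick v \<in> ?P \<and> v = g (pick v)" if "v \<in> S" for v using pick0 that by (rule bspec)
  define x where "x v = fst (pick v)" for v
  define a where "a v = snd (pick v)" for v
  have xK: "x v \<in> K" "norm (x v) = 1" if "v \<in> S" for v using pick[OF that] by (auto simp: x_def)
  have aK: "\<forall>y\<in>K. 0 \<le> y \<bullet> a v" "norm (a v) = 1" if "v \<in> S" for v
    using pick[OF that] by (auto simp: a_def)
  have vg: "v = g (x v, a v)" if "v \<in> S" for v using pick[OF that] by (simp add: x_def a_def)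
  have comp: "(\<Sum>v\<in>S. u v * ((x v \<bullet> j) * (a v \<bullet> i))) = 0" if "i \<in> Basis" "j \<in> Basis" for i j
  proof -
    have "(\<Sum>v\<in>S. u v *\<^sub>R v) $ (Abs_idx i, Abs_idx j) = 0" using S(5) by simp
    then have "(\<Sum>v\<in>S. u v * (g (x v, a v) $ (Abs_idx i, Abs_idx j))) = 0"
      by (simp cong: sum.cong add: vg[symmetric])
    then show ?thesis using that by (simp add: g_def Abs_idx_inverse)
  qed
  have zj: "(\<Sum>v\<in>S. (u v * (w \<bullet> a v)) * (x v \<bullet> j)) = 0" if "j \<in> Basis" for j
  proof -
    have "(\<Sum>v\<in>S. (u v * (w \<bullet> a v)) * (x v \<bullet> j))
        = (\<Sum>v\<in>S. \<Sum>i\<in>Basis. (w \<bullet> i) * (u v * ((x v \<bullet> j) * (a v \<bullet> i))))"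
    proof (rule sum.cong[OF refl])
      fix v
      have "w \<bullet> a v = (\<Sum>i\<in>Basis. (w \<bullet> i) * (a v \<bullet> i))" by (rule euclidean_inner)
      then show "(u v * (w \<bullet> a v)) * (x v \<bullet> j) = (\<Sum>i\<in>Basis. (w \<bullet> i) * (u v * ((x v \<bullet> j) * (a v \<bullet> i))))"
        by (simp add: sum_distrib_left sum_distrib_right algebra_simps)
    qed
    also have "\<dots> = (\<Sum>i\<in>Basis. (w \<bullet> i) * (\<Sum>v\<in>S. u v * ((x v \<bullet> j) * (a v \<bullet> i))))"
      by (subst sum.swap) (simp add: sum_distrib_left)
    also have "\<dots> = 0" using comp that by simp
    finally show ?thesis .
  qed
  have z: "(\<Sum>v\<in>S. (u v * (w \<bullet> a v)) *\<^sub>R x v) = 0"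
    by (rule euclidean_eqI) (simp add: inner_sum_left zj)
  have pos: "0 < w \<bullet> a v" if "v \<in> S" for v
  proof -
    have "a v \<noteq> 0" using aK(2)[OF that] by (metis norm_zero zero_neq_one)
    then show ?thesis using pos_interior[OF aK(1)[OF that] _ w] by blast
  qed
  have inK: "\<forall>v\<in>S. (u v * (w \<bullet> a v)) *\<^sub>R x v \<in> K"
    using oc_scale[OF K] xK pos S(3) by (simp add: less_imp_le)
  have "u v = 0" if "v \<in> S" for v
  proof -
    have "(u v * (w \<bullet> a v)) *\<^sub>R x v = 0"
      using oc_pointed_sum[OF K S(1) inK z that] .
    then have "u v * (w \<bullet> a v) = 0" using xK(2)[OF that] by auto
    then show ?thesis using pos[OF that] by simp
  qed
  then have "sum u S = 0" by simp
  then show False using S(4) by simp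
qed



theorem proposition2p3:
  fixes K :: "'a::euclidean_space set"
  assumes "ordering_cone K"
    and "closed K"
    and "interior K \<noteq> {}"
  shows "dual_cone (pos_ops K) = convex hull {phi x x' | x x'. x \<in> K \<and> x' \<in> dual_cone K}"
proof
  note K = assms(1)
  show "convex hull {phi x x' | x x'. x \<in> K \<and> x' \<in> dual_cone K} \<subseteq> dual_cone (pos_ops K)"
  proof (rule hull_minimal)
    show "{phi x x' | x x'. x \<in> K \<and> x' \<in> dual_cone K} \<subseteq> dual_cone (pos_ops K)"
      by (auto simp: dual_cone_def pos_ops_def)
    show "convex (dual_cone (pos_ops K))"
      unfolding convex_def dual_cone_def
      by (auto simp: blinfun.add_left blinfun.scaleR_left)
  qed
  show "dual_cone (pos_ops K) \<subseteq> convex hull {phi x x' | x x'. x \<in> K \<and> x' \<in> dual_cone K}"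
  proof
    fix \<phi> assume \<phi>: "\<phi> \<in> dual_cone (pos_ops K)"
    obtain w where w: "w \<in> interior K" using assms(3) by blast
    define Kd where "Kd = {a::'a. \<forall>x\<in>K. 0 \<le> x \<bullet> a}"
    define P where "P = (K \<inter> sphere 0 1) \<times> (Kd \<inter> sphere 0 1)"
    define B where "B = g ` P"
    define C where "C = insert 0 (conic hull (convex hull B))"
    have "Kd = (\<Inter>x\<in>K. {a. x \<bullet> a \<ge> 0})" by (auto simp: Kd_def)
    then have closedKd: "closed Kd"
      by (simp add: closed_INT closed_halfspace_ge)
    have compB: "compact B" unfolding B_def P_def
      by (intro compact_continuous_image continuous_g compact_Times closed_Int_compact
          assms(2) compact_sphere closedKd)
    have notin: "0 \<notin> convex hull B"
      using zero_notin_hull[OF K w] by (simp add: B_def P_def Kd_def)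
    have closedC: "closed C" unfolding C_def
      by (intro closed_insert closed_conic_hull) (simp add: compact_convex_hull compB notin)
    have convexC: "convex C"
    proof (cases "B = {}")
      case True then show ?thesis by (simp add: C_def)
    next
      case False
      then have "0 \<in> conic hull (convex hull B)" by simp
      then have "C = conic hull (convex hull B)" by (auto simp: C_def)
      then show ?thesis by (simp add: convex_conic_hull)
    qed
    have scaleC: "c *\<^sub>R y \<in> C" if "c \<ge> 0" "y \<in> C" for c y
      using that conic_conic_hull[of "convex hull B"] unfolding C_def conic_def by auto
    have BC: "B \<subseteq> C" unfolding C_def
      using hull_subset[of B convex] hull_subset[of "convex hull B" conic] by blast
    have JC: "J \<phi> \<in> C"
    proof (rule ccontr)
      assume nC: "J \<phi> \<notin> C"
      obtain c where c: "c \<bullet> J \<phi> < 0" "\<forall>y\<in>C. 0 \<le> c \<bullet> y"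
        using cone_sep[OF convexC closedC nC _ scaleC] C_def by blast
      define M where "M = Mc c"
      have "M \<in> pos_ops K" unfolding pos_ops_def
      proof (intro CollectI ballI)
        fix x assume x: "x \<in> K"
        show "blinfun_apply M x \<in> K"
        proof (rule bipolar[OF K assms(2)], intro allI impI)
          fix a assume a: "\<forall>y\<in>K. 0 \<le> y \<bullet> a"
          show "0 \<le> blinfun_apply M x \<bullet> a"
          proof (cases "x = 0 \<or> a = 0")
            case True then show ?thesis by (auto simp: blinfun.zero_right)
          next
            case False
            then have nx: "norm x > 0" and na: "norm a > 0" by auto
            define x1 where "x1 = x /\<^sub>R norm x"
            define a1 where "a1 = a /\<^sub>R norm a"
            have x1: "x1 \<in> K \<inter> sphere 0 1"
              using oc_scale[OF K _ x, of "inverse (norm x)"] nx by (simp add: x1_def)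
            have a1: "a1 \<in> Kd \<inter> sphere 0 1"
              using a na by (simp add: a1_def Kd_def)
            have "g (x1, a1) \<in> C" using x1 a1 BC by (auto simp: B_def P_def)
            then have "0 \<le> c \<bullet> g (x1, a1)" using c by blast
            also have "c \<bullet> g (x1, a1) = blinfun_apply M x1 \<bullet> a1"
            proof -
              have "c \<bullet> g (x1, a1) = c \<bullet> J (phi x1 (blinfun_inner_left a1))" by (simp only: J_phi)
              also have "\<dots> = blinfun_apply (phi x1 (blinfun_inner_left a1)) (Mc c)" by (rule Mc_rep[symmetric])
              finally show ?thesis by (simp add: M_def)
            qed
            also have "\<dots> = (blinfun_apply M x \<bullet> a) / (norm x * norm a)"
              by (simp add: x1_def a1_def blinfun.scaleR_right field_simps)
            finally have "0 \<le> (blinfun_apply M x \<bullet> a) / (norm x * norm a)" .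
            moreover have "0 < norm x * norm a" using nx na by simp
            ultimately show ?thesis by (simp add: zero_le_divide_iff)
          qed
        qed
      qed
      then have "0 \<le> blinfun_apply \<phi> M" using \<phi> by (simp add: dual_cone_def)
      moreover have "blinfun_apply \<phi> M = c \<bullet> J \<phi>" by (simp add: M_def Mc_rep)
      ultimately show False using c by simp
    qed
    have Ed: "blinfun_inner_left a \<in> dual_cone K" if "a \<in> Kd" for a
      using that by (simp add: dual_cone_def Kd_def)
    show "\<phi> \<in> convex hull {phi x x' | x x'. x \<in> K \<and> x' \<in> dual_cone K}"
    proof (cases "J \<phi> = 0")
      case True
      have "J (phi 0 0) = 0" by (simp add: J_def vec_eq_iff)
      then have "\<phi> = phi 0 0" using True J_inj by metis
      moreover have "phi 0 0 \<in> {phi x x' | x x'. x \<in> K \<and> x' \<in> dual_cone K}"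
      proof -
        have "(0::'a \<Rightarrow>\<^sub>L real) \<in> dual_cone K" by (simp add: dual_cone_def)
        then show ?thesis using oc_zero[OF K]
          by (intro CollectI exI[of _ 0] conjI refl)
      qed
      ultimately show ?thesis by (simp add: hull_inc)
    next
      case False
      then have "J \<phi> \<in> conic hull (convex hull B)" using JC by (simp add: C_def)
      then obtain t y where ty: "0 \<le> t" "y \<in> convex hull B" "J \<phi> = t *\<^sub>R y"
        unfolding conic_hull_explicit by blast
      then obtain S u where S: "finite S" "S \<subseteq> B" "\<forall>v\<in>S. 0 \<le> u v" "sum u S = 1"
          "(\<Sum>v\<in>S. u v *\<^sub>R v) = y"
        unfolding convex_hull_explicit by blast
      have "\<forall>v\<in>S. \<exists>p. p \<in> P \<and> v = g p"
      proof
        fix v assume "v \<in> S"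
        then have "v \<in> g ` P" using S(2) B_def by (simp add: subset_iff)
        then obtain p where "p \<in> P" "v = g p" by (rule imageE)
        then show "\<exists>p. p \<in> P \<and> v = g p" by (intro exI conjI)
      qed
      then have "\<exists>pick. \<forall>v\<in>S. pick v \<in> P \<and> v = g (pick v)" by (rule bchoice)
      then obtain pick where pick0: "\<forall>v\<in>S. pick v \<in> P \<and> v = g (pick v)" ..
      define \<psi> where "\<psi> v = phi (t *\<^sub>R fst (pick v)) (blinfun_inner_left (snd (pick v)))" for v
      have J\<psi>: "J (\<psi> v) = t *\<^sub>R v" if "v \<in> S" for v
      proof -
        have "J (\<psi> v) = t *\<^sub>R J (phi (fst (pick v)) (blinfun_inner_left (snd (pick v))))"
          by (simp add: \<psi>_def phi_scale linear_scale[OF linear_J])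
        also have "\<dots> = t *\<^sub>R g (pick v)" by (simp add: J_phi)
        finally show ?thesis using pick0 that by auto
      qed
      have "J (\<Sum>v\<in>S. u v *\<^sub>R \<psi> v) = (\<Sum>v\<in>S. u v *\<^sub>R J (\<psi> v))"
        by (simp add: linear_sum[OF linear_J] linear_scale[OF linear_J] o_def)
      also have "\<dots> = (\<Sum>v\<in>S. t *\<^sub>R (u v *\<^sub>R v))"
        by (rule sum.cong[OF refl]) (simp add: J\<psi>)
      also have "\<dots> = t *\<^sub>R (\<Sum>v\<in>S. u v *\<^sub>R v)" by (rule scaleR_sum_right[symmetric])
      also have "\<dots> = J \<phi>" using ty S(5) by simp
      finally have eq: "\<phi> = (\<Sum>v\<in>S. u v *\<^sub>R \<psi> v)" using J_inj by metis
      have "\<psi> v \<in> {phi x x' | x x'. x \<in> K \<and> x' \<in> dual_cone K}" if "v \<in> S" for v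
      proof -
        have "pick v \<in> P" using pick0 that by auto
        then have "fst (pick v) \<in> K" "snd (pick v) \<in> Kd" by (auto simp: P_def mem_Times_iff)
        then have "t *\<^sub>R fst (pick v) \<in> K" "blinfun_inner_left (snd (pick v)) \<in> dual_cone K"
          using oc_scale[OF K ty(1)] Ed by auto
        then show ?thesis unfolding \<psi>_def by auto
      qed
      then show ?thesis unfolding eq
        by (intro convex_sum[OF S(1) convex_convex_hull S(4)]) (auto simp: S(3) hull_inc)
    qed
  qed
qed

end
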